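(* Consider the sub-$\ell^\infty$ structure on $\mathbb{R}^2$ defined by $X_1=\partial_x$, $X_2=x\partial_y$. The nonconstant extremal trajectories that have a singular arc (i.e. a $\varphi_j$-singular arc for some $j\in\{1,2\}$ for some extremal lift) are exactly the nonconstant admissible trajectories for which $u_1$ is a.e. constantly equal to $1$ or a.e. constantly equal to $-1$. Each of them consists of a single singular arc (the singularity holds on the whole domain of definition), and each of them is a time-minimizer.
   Context: Sub-$\ell^\infty$ structure defined by smooth vector fields $X_1,\dots,X_k$ on a manifold $M$: an admissible trajectory is an absolutely continuous curve $\gamma:[0,T]\to M$ together with a measurable control $u=(u_1,\dots,u_k):[0,T]\to\mathbb{R}^k$ with $|u_i(t)|\le1$ for all $i$ and a.e. $t$, such that $\dot\gamma(t)=\sum_i u_i(t)X_i(\gamma(t))$ for a.e. $t$. It is a time-minimizer (optimal) if no admissible trajectory joins $\gamma(0)$ to $\gamma(T)$ in time less than $T$. An extremal pair is a pair $(\lambda,\gamma)$ where $\gamma$ is admissible with control $u$ and $\lambda:[0,T]\to T^*M$ is absolutely continuous with $\lambda(t)\in T^*_{\gamma(t)}M\setminus\{0\}$, such that, with $\mathcal H(\lambda,p,u)=\sum_i u_i\langle\lambda,X_i(p)\rangle$, in canonical coordinates $\dot\lambda=-\partial_p\mathcal H(\lambda,\gamma,u)$, $\dot\gamma=\partial_\lambda\mathcal H(\lambda,\gamma,u)$ a.e., and there is a constant $\lambda_0\ge0$ with $\sum_iu_i(t)\langle\lambda(t),X_i(\gamma(t))\rangle=\sum_i|\langle\lambda(t),X_i(\gamma(t))\rangle|=\lambda_0$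 for a.e. $t$; $\gamma$ is then an extremal trajectory and $\lambda$ an extremal lift. The switching functions are $\varphi_j(t)=\langle\lambda(t),X_j(\gamma(t))\rangle$. The restriction of an extremal pair to an open interval $I$ is a $\varphi_j$-singular arc if $\varphi_j\equiv0$ on $I$. *)

theory Defs
  imports "HOL-Analysis.Analysis"
begin

definition abs_cont_on :: "real set \<Rightarrow> (real \<Rightarrow> 'a::real_normed_vector) \<Rightarrow> bool" where
  "abs_cont_on S f \<longleftrightarrow>
     (\<forall>e>0. \<exists>d>0. \<forall>(n::nat) (a::nat \<Rightarrow> real) b.
        (\<forall>i<n. a i \<in> S \<and> b i \<in> S \<and> a i \<le> b i) \<and>
        (\<forall>i<n. \<forall>j<n. i \<noteq> j \<longrightarrow> b i \<le> a j \<or> b j \<le> a i) \<and>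
        (\<Sum>i<n. b i - a i) < d
        \<longrightarrow> (\<Sum>i<n. norm (f (b i) - f (a i))) < e)"

definition X :: "nat \<Rightarrow> real \<times> real \<Rightarrow> real \<times> real" where
  "X j p = (if j = 1 then (1, 0) else (0, fst p))"

text \<open>Controls are pairs u = (u1,u2); covectors are pairs paired with vectors by the
  standard coordinate pairing (inner product on real x real).\<close>
definition Ham :: "real \<times> real \<Rightarrow> real \<times> real \<Rightarrow> real \<times> real \<Rightarrow> real" where
  "Ham l p w = fst w * (l \<bullet> X 1 p) + snd w * (l \<bullet> X 2 p)"

definition admissible :: "real \<Rightarrow> (real \<Rightarrow> real \<times> real) \<Rightarrow> (real \<Rightarrow> real \<times> real) \<Rightarrow> bool" where
  "admissible T \<gamma> u \<longleftrightarrow>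
     0 \<le> T \<and> abs_cont_on {0..T} \<gamma> \<and>
     u \<in> borel_measurable (restrict_space lebesgue {0..T}) \<and>
     (AE t in lebesgue. t \<in> {0..T} \<longrightarrow> \<bar>fst (u t)\<bar> \<le> 1 \<and> \<bar>snd (u t)\<bar> \<le> 1) \<and>
     (AE t in lebesgue. t \<in> {0..T} \<longrightarrow>
        (\<gamma> has_vector_derivative (fst (u t) *\<^sub>R X 1 (\<gamma> t) + snd (u t) *\<^sub>R X 2 (\<gamma> t)))
          (at t within {0..T}))"

definition time_minimizer :: "real \<Rightarrow> (real \<Rightarrow> real \<times> real) \<Rightarrow> bool" where
  "time_minimizer T \<gamma> \<longleftrightarrow>
     (\<forall>T' \<gamma>' u'. admissible T' \<gamma>' u' \<and> \<gamma>' 0 = \<gamma> 0 \<and> \<gamma>' T' = \<gamma> T \<longrightarrow> T \<le> T')"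

text \<open>Extremal pair: Hamiltonian system in canonical coordinates (partial derivatives of
  the Hamiltonian expressed via Frechet derivatives) plus the maximality condition.\<close>
definition extremal_pair ::
  "real \<Rightarrow> (real \<Rightarrow> real \<times> real) \<Rightarrow> (real \<Rightarrow> real \<times> real) \<Rightarrow> (real \<Rightarrow> real \<times> real) \<Rightarrow> bool" where
  "extremal_pair T lam \<gamma> u \<longleftrightarrow>
     admissible T \<gamma> u \<and> abs_cont_on {0..T} lam \<and> (\<forall>t\<in>{0..T}. lam t \<noteq> 0) \<and>
     (AE t in lebesgue. t \<in> {0..T} \<longrightarrow>
        (\<exists>w. (lam has_vector_derivative w) (at t within {0..T}) \<and>
             ((\<lambda>p. Ham (lam t) p (u t)) has_derivative (\<lambda>h. - (w \<bullet> h))) (at (\<gamma> t)))) \<and>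
     (AE t in lebesgue. t \<in> {0..T} \<longrightarrow>
        (\<exists>v. (\<gamma> has_vector_derivative v) (at t within {0..T}) \<and>
             ((\<lambda>l. Ham l (\<gamma> t) (u t)) has_derivative (\<lambda>h. v \<bullet> h)) (at (lam t)))) \<and>
     (\<exists>lam0\<ge>0. AE t in lebesgue. t \<in> {0..T} \<longrightarrow>
        Ham (lam t) (\<gamma> t) (u t) = \<bar>lam t \<bullet> X 1 (\<gamma> t)\<bar> + \<bar>lam t \<bullet> X 2 (\<gamma> t)\<bar> \<and>
        \<bar>lam t \<bullet> X 1 (\<gamma> t)\<bar> + \<bar>lam t \<bullet> X 2 (\<gamma> t)\<bar> = lam0)"

definition switching :: "(real \<Rightarrow> real \<times> real) \<Rightarrow> (real \<Rightarrow> real \<times> real) \<Rightarrow> nat \<Rightarrow> real \<Rightarrow> real" where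
  "switching lam \<gamma> j t = lam t \<bullet> X j (\<gamma> t)"

definition singular_arc ::
  "real \<Rightarrow> (real \<Rightarrow> real \<times> real) \<Rightarrow> (real \<Rightarrow> real \<times> real) \<Rightarrow> nat \<Rightarrow> real \<Rightarrow> real \<Rightarrow> bool" where
  "singular_arc T lam \<gamma> j a b \<longleftrightarrow>
     0 \<le> a \<and> a < b \<and> b \<le> T \<and> (\<forall>t\<in>{a<..<b}. switching lam \<gamma> j t = 0)"

definition nonconstant :: "real \<Rightarrow> (real \<Rightarrow> real \<times> real) \<Rightarrow> bool" where
  "nonconstant T \<gamma> \<longleftrightarrow> (\<exists>s\<in>{0..T}. \<exists>t\<in>{0..T}. \<gamma> s \<noteq> \<gamma> t)"

definition extremal_with_singular_arc :: "real \<Rightarrow> (real \<Rightarrow> real \<times> real) \<Rightarrow> bool" where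
  "extremal_with_singular_arc T \<gamma> \<longleftrightarrow>
     (\<exists>u lam j a b. j \<in> {1, 2} \<and> extremal_pair T lam \<gamma> u \<and> singular_arc T lam \<gamma> j a b)"

end

theory Submission
  imports Defs
begin


lemma null_open_cover:
  assumes "N \<in> null_sets lebesgue" "e > 0"
  obtains T where "open T" "N \<subseteq> T" "T \<in> lmeasurable" "measure lebesgue T < e"
proof -
  obtain T where T: "open T" "N \<subseteq> T" "(T - N) \<in> lmeasurable" "emeasure lebesgue (T - N) < ennreal e"
    using sets_lebesgue_outer_open[of N e] assms by auto
  have TN: "T = (T - N) \<union> N" using T by auto
  have Nl: "N \<in> lmeasurable" using assms(1) by (simp add: fmeasurableI_null_sets)
  have "T \<in> lmeasurable" using TN T(3) Nl by (metis fmeasurable.Un)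
  moreover have "measure lebesgue T \<le> measure lebesgue (T - N) + measure lebesgue N"
    using TN T(3) Nl by (metis measure_Un_le fmeasurableD)
  moreover have "measure lebesgue N = 0" using assms(1) by (simp add: measure_eq_0_null_sets)
  moreover have "measure lebesgue (T - N) < e"
    using T(3,4) assms(2) by (simp add: emeasure_eq_measure2 ennreal_less_iff)
  ultimately show ?thesis using that T by fastforce
qed

lemma fam_len_le:
  fixes a b :: "nat \<Rightarrow> real"
  assumes "\<forall>i<n. a i < b i \<and> {a i..b i} \<subseteq> U"
    "\<forall>i<n. \<forall>j<n. i \<noteq> j \<longrightarrow> b i \<le> a j \<or> b j \<le> a i"
    "U \<in> lmeasurable"
  shows "(\<Sum>i<n. b i - a i) \<le> measure lebesgue U"
proof -
  have "measure lebesgue (\<Union>i\<in>{..<n}. {a i<..b i}) = (\<Sum>i<n. measure lebesgue {a i<..b i})"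
  proof (rule measure_UNION')
    show "pairwise (\<lambda>i j. disjnt {a i<..b i} {a j<..b j}) {..<n}"
      using assms(2) unfolding pairwise_def disjnt_def by fastforce
  qed (auto intro: measurable_convex)
  also have "\<dots> = (\<Sum>i<n. b i - a i)"
    using assms(1) by (intro sum.cong) auto
  finally have eq: "measure lebesgue (\<Union>i\<in>{..<n}. {a i<..b i}) = (\<Sum>i<n. b i - a i)" .
  have "measure lebesgue (\<Union>i\<in>{..<n}. {a i<..b i}) \<le> measure lebesgue U"
    apply (rule measure_mono_fmeasurable)
    using assms(1,3) by force+
  then show ?thesis using eq by simp
qed

lemma ac_bound_eps:
  fixes f :: "real \<Rightarrow> real"
  assumes ab: "a \<le> b" and ac: "abs_cont_on {a..b} f"
    and der: "AE t in lebesgue. t \<in> {a..b} \<longrightarrow>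
       (\<exists>d. (f has_real_derivative d) (at t within {a..b}) \<and> d \<le> M)"
    and ep: "\<epsilon> > 0"
  shows "f b - f a \<le> (M + \<epsilon>) * (b - a) + \<epsilon> + \<bar>M\<bar> * \<epsilon>"
proof -
  have "\<exists>\<delta>0>0. \<forall>(n::nat) (a'::nat \<Rightarrow> real) b'.
        (\<forall>i<n. a' i \<in> {a..b} \<and> b' i \<in> {a..b} \<and> a' i \<le> b' i) \<and>
        (\<forall>i<n. \<forall>j<n. i \<noteq> j \<longrightarrow> b' i \<le> a' j \<or> b' j \<le> a' i) \<and>
        (\<Sum>i<n. b' i - a' i) < \<delta>0
        \<longrightarrow> (\<Sum>i<n. norm (f (b' i) - f (a' i))) < \<epsilon>"
    using ac ep unfolding abs_cont_on_def by blast
  then obtain \<delta>0 where d0: "\<delta>0 > 0" and d0P: "\<forall>(n::nat) (a'::nat \<Rightarrow> real) b'.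
        (\<forall>i<n. a' i \<in> {a..b} \<and> b' i \<in> {a..b} \<and> a' i \<le> b' i) \<and>
        (\<forall>i<n. \<forall>j<n. i \<noteq> j \<longrightarrow> b' i \<le> a' j \<or> b' j \<le> a' i) \<and>
        (\<Sum>i<n. b' i - a' i) < \<delta>0
        \<longrightarrow> (\<Sum>i<n. norm (f (b' i) - f (a' i))) < \<epsilon>"
    by blast
  define \<delta> where "\<delta> = min \<delta>0 \<epsilon>"
  have dpos: "\<delta> > 0" using d0 ep by (simp add: \<delta>_def)
  obtain N where N: "{x \<in> space lebesgue. \<not> (x \<in> {a..b} \<longrightarrow>
       (\<exists>d. (f has_real_derivative d) (at x within {a..b}) \<and> d \<le> M))} \<subseteq> N"
     "emeasure lebesgue N = 0" "N \<in> sets lebesgue"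
    using der by (rule AE_E)
  have Nnull: "N \<in> null_sets lebesgue" using N by auto
  obtain T where T: "open T" "N \<subseteq> T" "T \<in> lmeasurable" "measure lebesgue T < \<delta>"
    using null_open_cover[OF Nnull dpos] by blast
  have "\<forall>t. \<exists>r>0. (t \<in> T \<longrightarrow> ball t r \<subseteq> T) \<and>
     (t \<in> {a..b} \<and> t \<notin> T \<longrightarrow> (\<exists>d\<le>M. \<forall>s\<in>{a..b}. \<bar>s - t\<bar> < r \<longrightarrow>
          \<bar>f s - f t - d * (s - t)\<bar> \<le> \<epsilon> * \<bar>s - t\<bar>))"
  proof
    fix t
    show "\<exists>r>0. (t \<in> T \<longrightarrow> ball t r \<subseteq> T) \<and>
     (t \<in> {a..b} \<and> t \<notin> T \<longrightarrow> (\<exists>d\<le>M. \<forall>s\<in>{a..b}. \<bar>s - t\<bar> < r \<longrightarrow>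
          \<bar>f s - f t - d * (s - t)\<bar> \<le> \<epsilon> * \<bar>s - t\<bar>))"
    proof (cases "t \<in> T")
      case True
      then obtain r where "r > 0" "ball t r \<subseteq> T" using T(1) openE by blast
      then show ?thesis using True by blast
    next
      case False
      show ?thesis
      proof (cases "t \<in> {a..b}")
        case True
        then have "t \<notin> N" using False T(2) by blast
        then obtain d where d: "(f has_real_derivative d) (at t within {a..b})" "d \<le> M"
          using N(1) True by auto
        then have "(f has_derivative (*) d) (at t within {a..b})"
          by (simp add: has_field_derivative_def)
        then obtain r where "r > 0" "\<forall>y\<in>{a..b}. norm (y - t) < r \<longrightarrow>
              norm (f y - f t - d * (y - t)) \<le> \<epsilon> * norm (y - t)"
          using ep unfolding has_derivative_within_alt by blast
        then show ?thesis using d(2) False by (auto simp: real_norm_def)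
      next
        case False
        then show ?thesis using \<open>t \<notin> T\<close> by (intro exI[of _ 1]) auto
      qed
    qed
  qed
  then obtain r where r: "\<And>t. r t > 0" "\<And>t. t \<in> T \<Longrightarrow> ball t (r t) \<subseteq> T"
    "\<And>t. t \<in> {a..b} \<Longrightarrow> t \<notin> T \<Longrightarrow> (\<exists>d\<le>M. \<forall>s\<in>{a..b}. \<bar>s - t\<bar> < r t \<longrightarrow>
          \<bar>f s - f t - d * (s - t)\<bar> \<le> \<epsilon> * \<bar>s - t\<bar>)"
    by metis
  have "gauge (\<lambda>t. ball t (r t))" using r(1) by (simp add: gauge_ball_dependent)
  then obtain p where p: "p tagged_division_of {a..b}" "(\<lambda>t. ball t (r t)) fine p"
    using fine_division_exists_real by blast
  have sumf: "(\<Sum>(x,K)\<in>p. f (Sup K) - f (Inf K)) = f b - f a"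
    using additive_tagged_division_1[OF ab p(1)] by simp
  have sumc: "(\<Sum>(x,K)\<in>p. measure lborel K) = b - a"
    using additive_content_tagged_division[of p a b] p(1) ab by (simp add: cbox_interval)
  have pfin: "finite p" using p(1) by (rule tagged_division_of_finite)
  have tagK: "\<exists>c d. K = {c..d} \<and> c \<le> d \<and> x \<in> K \<and> K \<subseteq> {a..b} \<and> K \<subseteq> ball x (r x)"
    if "(x,K) \<in> p" for x K
  proof -
    have "x \<in> K" "K \<subseteq> {a..b}" "\<exists>c d. K = cbox c d"
      using tagged_division_ofD[OF p(1)] that by auto
    moreover have "K \<subseteq> ball x (r x)" using p(2) that unfolding fine_def by auto
    ultimately show ?thesis by (auto simp: cbox_interval)
  qed
  define Q where "Q = {(x,K)\<in>p. x \<in> T \<and> measure lborel K > 0}"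
  have termb: "f (Sup K) - f (Inf K) \<le> (M + \<epsilon>) * measure lborel K +
      (if (x,K) \<in> Q then \<bar>f (Sup K) - f (Inf K)\<bar> + \<bar>M\<bar> * measure lborel K else 0)"
    if xK: "(x,K) \<in> p" for x K
  proof -
    obtain c d where K: "K = {c..d}" "c \<le> d" "x \<in> K" "K \<subseteq> {a..b}" "K \<subseteq> ball x (r x)"
      using tagK[OF xK] by blast
    have SI: "Sup K = d" "Inf K = c" "measure lborel K = d - c" using K by auto
    show ?thesis
    proof (cases "x \<in> T")
      case False
      have xab: "x \<in> {a..b}" using K by auto
      obtain dd where dd: "dd \<le> M" "\<forall>s\<in>{a..b}. \<bar>s - x\<bar> < r x \<longrightarrow>
          \<bar>f s - f x - dd * (s - x)\<bar> \<le> \<epsilon> * \<bar>s - x\<bar>"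
        using r(3)[OF xab False] by blast
      have "c \<in> K" "d \<in> K" using K by auto
      then have cdb: "c \<in> ball x (r x)" "d \<in> ball x (r x)" "c \<in> {a..b}" "d \<in> {a..b}" using K(4,5) by auto
      have cin: "c \<in> {a..b}" "\<bar>c - x\<bar> < r x" using cdb by (auto simp: dist_real_def abs_minus_commute)
      have din: "d \<in> {a..b}" "\<bar>d - x\<bar> < r x" using cdb by (auto simp: dist_real_def abs_minus_commute)
      have "\<bar>f c - f x - dd * (c - x)\<bar> \<le> \<epsilon> * \<bar>c - x\<bar>" using dd cin by blast
      moreover have "\<bar>f d - f x - dd * (d - x)\<bar> \<le> \<epsilon> * \<bar>d - x\<bar>" using dd din by blast
      moreover have "c \<le> x" "x \<le> d" using K by auto
      ultimately have "f d - f c \<le> dd * (d - c) + \<epsilon> * (d - c)"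
        by (simp add: abs_le_iff algebra_simps)
      moreover have "dd * (d - c) \<le> M * (d - c)" using dd(1) K(2) by (simp add: mult_right_mono)
      moreover have "(if (x,K) \<in> Q then \<bar>f (Sup K) - f (Inf K)\<bar> + \<bar>M\<bar> * measure lborel K else 0) \<ge> 0"
        by simp
      ultimately show ?thesis unfolding SI by (simp add: algebra_simps)
    next
      case True
      show ?thesis
      proof (cases "measure lborel K > 0")
        case True
        then have "(x,K) \<in> Q" using xK \<open>x \<in> T\<close> by (simp add: Q_def)
        moreover have "f d - f c \<le> M * (d - c) + \<bar>f d - f c\<bar> + \<bar>M\<bar> * (d - c) + \<epsilon> * (d - c)"
        proof -
          have h1: "-\<bar>M\<bar> * (d - c) \<le> M * (d - c)" using K(2) by (intro mult_right_mono) auto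
          have h2: "0 \<le> \<epsilon> * (d - c)" using K(2) ep by simp
          show ?thesis using h1 h2 abs_ge_self[of "f d - f c"] by linarith
        qed
        ultimately show ?thesis unfolding SI by (simp add: algebra_simps)
      next
        case False
        then have "c = d" using SI K(2) by simp
        then show ?thesis unfolding SI by simp
      qed
    qed
  qed
  have "f b - f a \<le> (\<Sum>(x,K)\<in>p. (M + \<epsilon>) * measure lborel K +
      (if (x,K) \<in> Q then \<bar>f (Sup K) - f (Inf K)\<bar> + \<bar>M\<bar> * measure lborel K else 0))"
    unfolding sumf[symmetric] by (rule sum_mono) (use termb in auto)
  also have "\<dots> = (M + \<epsilon>) * (b - a) + (\<Sum>(x,K)\<in>Q. \<bar>f (Sup K) - f (Inf K)\<bar> + \<bar>M\<bar> * measure lborel K)"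
  proof -
    have "(\<Sum>(x,K)\<in>p. (M + \<epsilon>) * measure lborel K +
      (if (x,K) \<in> Q then \<bar>f (Sup K) - f (Inf K)\<bar> + \<bar>M\<bar> * measure lborel K else 0))
      = (\<Sum>(x,K)\<in>p. (M + \<epsilon>) * measure lborel K) +
        (\<Sum>(x,K)\<in>p. (if (x,K) \<in> Q then \<bar>f (Sup K) - f (Inf K)\<bar> + \<bar>M\<bar> * measure lborel K else 0))"
      by (simp add: sum.distrib split_def)
    also have "(\<Sum>(x,K)\<in>p. (M + \<epsilon>) * measure lborel K) = (M + \<epsilon>) * (b - a)"
      using sumc by (simp add: sum_distrib_left[symmetric] split_def)
    also have "(\<Sum>(x,K)\<in>p. (if (x,K) \<in> Q then \<bar>f (Sup K) - f (Inf K)\<bar> + \<bar>M\<bar> * measure lborel K else 0))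
       = (\<Sum>(x,K)\<in>Q. \<bar>f (Sup K) - f (Inf K)\<bar> + \<bar>M\<bar> * measure lborel K)"
    proof -
      have "Q \<subseteq> p" by (auto simp: Q_def)
      then have "p \<inter> Q = Q" "Q \<inter> p = Q" by auto
      then show ?thesis
        by (simp add: split_def sum.If_cases pfin)
    qed
    finally show ?thesis .
  qed
  also have "\<dots> \<le> (M + \<epsilon>) * (b - a) + \<epsilon> + \<bar>M\<bar> * \<epsilon>"
  proof -
    have Qfin: "finite Q" using pfin by (rule finite_subset[rotated]) (auto simp: Q_def)
    obtain h where h: "bij_betw h {0..<card Q} Q" using ex_bij_betw_nat_finite[OF Qfin] by blast
    define n where "n = card Q"
    define a' where "a' i = Inf (snd (h i))" for i
    define b' where "b' i = Sup (snd (h i))" for i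
    have hQ: "h i \<in> Q" if "i < n" for i using h that by (auto simp: n_def bij_betw_def)
    have iv: "snd (h i) = {a' i..b' i} \<and> a' i < b' i \<and> {a' i..b' i} \<subseteq> T \<and> {a' i..b' i} \<subseteq> {a..b}"
      if "i < n" for i
    proof -
      obtain x K where hx: "h i = (x,K)" by fastforce
      have xK: "(x,K) \<in> p" "x \<in> T" "measure lborel K > 0" using hQ[OF that] hx by (auto simp: Q_def)
      obtain c d where K: "K = {c..d}" "c \<le> d" "x \<in> K" "K \<subseteq> {a..b}" "K \<subseteq> ball x (r x)"
        using tagK[OF xK(1)] by blast
      have "K \<subseteq> T" using K(5) r(2)[OF xK(2)] by blast
      then show ?thesis using K xK(3) by (auto simp: a'_def b'_def hx)
    qed
    have nov: "b' i \<le> a' j \<or> b' j \<le> a' i" if "i < n" "j < n" "i \<noteq> j" for i j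
    proof -
      have "h i \<noteq> h j" using h that by (auto simp: n_def bij_betw_def inj_on_def)
      moreover have "h i \<in> p" "h j \<in> p" using hQ[of i] hQ[of j] that unfolding Q_def by auto
      ultimately have "interior (snd (h i)) \<inter> interior (snd (h j)) = {}"
        using tagged_division_ofD(5)[OF p(1), of "fst (h i)" "snd (h i)" "fst (h j)" "snd (h j)"]
        by auto
      then have disj: "{a' i<..<b' i} \<inter> {a' j<..<b' j} = {}" using iv that by simp
      show ?thesis
      proof (rule ccontr)
        assume "\<not> ?thesis"
        then have "max (a' i) (a' j) < min (b' i) (b' j)" using iv that by auto
        then have "(max (a' i) (a' j) + min (b' i) (b' j)) / 2 \<in> {a' i<..<b' i} \<inter> {a' j<..<b' j}"
          by auto
        then show False using disj by blast
      qed
    qed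
    have len: "(\<Sum>i<n. b' i - a' i) \<le> measure lebesgue T"
      using fam_len_le[of n a' b' T] iv nov T(3) by auto
    have sum_eq: "(\<Sum>i<n. g (h i)) = (\<Sum>q\<in>Q. g q)" for g :: "real \<times> real set \<Rightarrow> real"
      using sum.reindex_bij_betw[OF h, of g] by (simp add: n_def lessThan_atLeast0)
    have S1: "(\<Sum>(x,K)\<in>Q. measure lborel K) < \<delta>"
    proof -
      have "(\<Sum>(x,K)\<in>Q. measure lborel K) = (\<Sum>i<n. b' i - a' i)"
      proof -
        have "(\<Sum>i<n. measure lborel (snd (h i))) = (\<Sum>i<n. b' i - a' i)"
        proof (rule sum.cong)
          fix i assume "i \<in> {..<n}"
          then have "snd (h i) = {a' i..b' i}" "a' i < b' i" using iv by auto
          then show "measure lborel (snd (h i)) = b' i - a' i" by simp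
        qed simp
        then show ?thesis using sum_eq[of "\<lambda>q. measure lborel (snd q)"] by (simp add: split_def)
      qed
      then show ?thesis using len T(4) by linarith
    qed
    have S2: "(\<Sum>(x,K)\<in>Q. \<bar>f (Sup K) - f (Inf K)\<bar>) < \<epsilon>"
    proof -
      have "(\<Sum>(x,K)\<in>Q. \<bar>f (Sup K) - f (Inf K)\<bar>) = (\<Sum>i<n. norm (f (b' i) - f (a' i)))"
        using sum_eq[of "\<lambda>(x,K). \<bar>f (Sup K) - f (Inf K)\<bar>"] by (simp add: split_def a'_def b'_def)
      also have "\<dots> < \<epsilon>"
      proof (rule d0P[rule_format], intro conjI allI impI)
        fix i assume "i < n"
        then have "a' i < b' i" "{a' i..b' i} \<subseteq> {a..b}" using iv by auto
        then show "a' i \<in> {a..b}" "b' i \<in> {a..b}" "a' i \<le> b' i" by auto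
      next
        fix i j assume "i < n" "j < n" "i \<noteq> j"
        then show "b' i \<le> a' j \<or> b' j \<le> a' i" using nov by blast
      next
        show "(\<Sum>i<n. b' i - a' i) < \<delta>0" using len T(4) unfolding \<delta>_def by linarith
      qed
      finally show ?thesis .
    qed
    have "(\<Sum>(x,K)\<in>Q. \<bar>f (Sup K) - f (Inf K)\<bar> + \<bar>M\<bar> * measure lborel K)
        = (\<Sum>(x,K)\<in>Q. \<bar>f (Sup K) - f (Inf K)\<bar>) + \<bar>M\<bar> * (\<Sum>(x,K)\<in>Q. measure lborel K)"
      by (simp add: sum.distrib sum_distrib_left split_def)
    also have "\<dots> \<le> \<epsilon> + \<bar>M\<bar> * \<epsilon>"
    proof -
      have "\<bar>M\<bar> * (\<Sum>(x,K)\<in>Q. measure lborel K) \<le> \<bar>M\<bar> * \<epsilon>"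
        using S1 by (intro mult_left_mono) (auto simp: \<delta>_def)
      then show ?thesis using S2 by linarith
    qed
    finally show ?thesis by simp
  qed
  finally show ?thesis .
qed



lemma ac_bound:
  fixes f :: "real \<Rightarrow> real"
  assumes ab: "a \<le> b" and ac: "abs_cont_on {a..b} f"
    and der: "AE t in lebesgue. t \<in> {a..b} \<longrightarrow>
       (\<exists>d. (f has_real_derivative d) (at t within {a..b}) \<and> d \<le> M)"
  shows "f b - f a \<le> M * (b - a)"
proof (rule ccontr)
  assume nt: "\<not> f b - f a \<le> M * (b - a)"
  define C where "C = b - a + 1 + \<bar>M\<bar>"
  have C: "C > 0" using ab by (simp add: C_def)
  define e where "e = (f b - f a - M * (b - a)) / (2 * C)"
  have e: "e > 0" using nt C by (simp add: e_def)
  have "f b - f a \<le> (M + e) * (b - a) + e + \<bar>M\<bar> * e"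
    by (rule ac_bound_eps[OF ab ac der e])
  also have "\<dots> = M * (b - a) + e * C" by (simp add: C_def algebra_simps)
  also have "e * C = (f b - f a - M * (b - a)) / 2" using C by (simp add: e_def)
  finally have "f b - f a \<le> M * (b - a) + (f b - f a - M * (b - a)) / 2" .
  moreover have gen: "x \<le> y" if "x \<le> y + (x - y) / 2" for x y :: real using that by (simp add: field_simps)
  ultimately show False using nt by blast
qed

lemma ac_sub:
  assumes ac: "abs_cont_on S f" and sub: "S' \<subseteq> S"
  shows "abs_cont_on S' f"
  unfolding abs_cont_on_def
proof (intro allI impI)
  fix e :: real assume e: "e > 0"
  obtain d where d: "d > 0" "\<forall>(n::nat) (a::nat \<Rightarrow> real) b.
        (\<forall>i<n. a i \<in> S \<and> b i \<in> S \<and> a i \<le> b i) \<and>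
        (\<forall>i<n. \<forall>j<n. i \<noteq> j \<longrightarrow> b i \<le> a j \<or> b j \<le> a i) \<and>
        (\<Sum>i<n. b i - a i) < d
        \<longrightarrow> (\<Sum>i<n. norm (f (b i) - f (a i))) < e"
    using ac e unfolding abs_cont_on_def by blast
  show "\<exists>d>0. \<forall>(n::nat) (a::nat \<Rightarrow> real) b.
        (\<forall>i<n. a i \<in> S' \<and> b i \<in> S' \<and> a i \<le> b i) \<and>
        (\<forall>i<n. \<forall>j<n. i \<noteq> j \<longrightarrow> b i \<le> a j \<or> b j \<le> a i) \<and>
        (\<Sum>i<n. b i - a i) < d
        \<longrightarrow> (\<Sum>i<n. norm (f (b i) - f (a i))) < e"
  proof (intro exI[of _ d] conjI allI impI)
    fix n :: nat and a b :: "nat \<Rightarrow> real"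
    assume H: "(\<forall>i<n. a i \<in> S' \<and> b i \<in> S' \<and> a i \<le> b i) \<and>
        (\<forall>i<n. \<forall>j<n. i \<noteq> j \<longrightarrow> b i \<le> a j \<or> b j \<le> a i) \<and>
        (\<Sum>i<n. b i - a i) < d"
    then have "(\<forall>i<n. a i \<in> S \<and> b i \<in> S \<and> a i \<le> b i)" using sub by blast
    then show "(\<Sum>i<n. norm (f (b i) - f (a i))) < e" using d(2) H by blast
  qed (use d in auto)
qed

lemma ac_linear:
  assumes ac: "abs_cont_on S f" and g: "bounded_linear g"
  shows "abs_cont_on S (\<lambda>t. g (f t))"
  unfolding abs_cont_on_def
proof (intro allI impI)
  fix e :: real assume e: "e > 0"
  obtain K where K: "K > 0" "\<And>x. norm (g x) \<le> norm x * K"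
    using bounded_linear.pos_bounded[OF g] by blast
  obtain d where d: "d > 0" "\<forall>(n::nat) (a::nat \<Rightarrow> real) b.
        (\<forall>i<n. a i \<in> S \<and> b i \<in> S \<and> a i \<le> b i) \<and>
        (\<forall>i<n. \<forall>j<n. i \<noteq> j \<longrightarrow> b i \<le> a j \<or> b j \<le> a i) \<and>
        (\<Sum>i<n. b i - a i) < d
        \<longrightarrow> (\<Sum>i<n. norm (f (b i) - f (a i))) < e / K"
    using ac divide_pos_pos[OF e K(1)] unfolding abs_cont_on_def by blast
  show "\<exists>d>0. \<forall>(n::nat) (a::nat \<Rightarrow> real) b.
        (\<forall>i<n. a i \<in> S \<and> b i \<in> S \<and> a i \<le> b i) \<and>
        (\<forall>i<n. \<forall>j<n. i \<noteq> j \<longrightarrow> b i \<le> a j \<or> b j \<le> a i) \<and>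
        (\<Sum>i<n. b i - a i) < d
        \<longrightarrow> (\<Sum>i<n. norm (g (f (b i)) - g (f (a i)))) < e"
  proof (intro exI[of _ d] conjI allI impI)
    fix n :: nat and a b :: "nat \<Rightarrow> real"
    assume H: "(\<forall>i<n. a i \<in> S \<and> b i \<in> S \<and> a i \<le> b i) \<and>
        (\<forall>i<n. \<forall>j<n. i \<noteq> j \<longrightarrow> b i \<le> a j \<or> b j \<le> a i) \<and>
        (\<Sum>i<n. b i - a i) < d"
    have "(\<Sum>i<n. norm (g (f (b i)) - g (f (a i)))) = (\<Sum>i<n. norm (g (f (b i) - f (a i))))"
      by (simp add: linear_diff[OF bounded_linear.linear[OF g]])
    also have "\<dots> \<le> (\<Sum>i<n. norm (f (b i) - f (a i)) * K)"
      by (intro sum_mono K(2))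
    also have "\<dots> = (\<Sum>i<n. norm (f (b i) - f (a i))) * K"
      by (simp add: sum_distrib_right)
    also have "\<dots> < e / K * K"
      using d(2) H K(1) by (intro mult_strict_right_mono) auto
    also have "\<dots> = e" using K(1) by simp
    finally show "(\<Sum>i<n. norm (g (f (b i)) - g (f (a i)))) < e" .
  qed (use d in auto)
qed

lemma ac_cont:
  assumes ac: "abs_cont_on S f"
  shows "continuous_on S f"
  unfolding continuous_on_iff
proof (intro ballI allI impI)
  fix x e assume x: "x \<in> S" and e: "(e::real) > 0"
  obtain d where d: "d > 0" "\<forall>(n::nat) (a::nat \<Rightarrow> real) b.
        (\<forall>i<n. a i \<in> S \<and> b i \<in> S \<and> a i \<le> b i) \<and>
        (\<forall>i<n. \<forall>j<n. i \<noteq> j \<longrightarrow> b i \<le> a j \<or> b j \<le> a i) \<and>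
        (\<Sum>i<n. b i - a i) < d
        \<longrightarrow> (\<Sum>i<n. norm (f (b i) - f (a i))) < e"
    using ac e unfolding abs_cont_on_def by blast
  show "\<exists>d>0. \<forall>x'\<in>S. dist x' x < d \<longrightarrow> dist (f x') (f x) < e"
  proof (intro exI[of _ d] conjI ballI impI)
    fix x' assume x': "x' \<in> S" "dist x' x < d"
    have "(\<Sum>i<(1::nat). norm (f ((\<lambda>_. max x x') i) - f ((\<lambda>_. min x x') i))) < e"
      using d(2)[rule_format, of 1 "\<lambda>_. min x x'" "\<lambda>_. max x x'"] x x'
      by (auto simp: dist_real_def min_def max_def abs_if split: if_splits)
    then show "dist (f x') (f x) < e"
      by (auto simp: dist_norm min_def max_def norm_minus_commute split: if_splits)
  qed (use d in auto)
qed

lemma ac_bound_sub: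
  fixes f :: "real \<Rightarrow> real"
  assumes ac: "abs_cont_on {a..b} f"
    and der: "AE t in lebesgue. t \<in> {a..b} \<longrightarrow>
       (\<exists>d. (f has_vector_derivative d) (at t within {a..b}) \<and> d \<le> M)"
    and s: "a \<le> s" "s \<le> s'" "s' \<le> b"
  shows "f s' - f s \<le> M * (s' - s)"
proof (rule ac_bound[OF s(2)])
  show "abs_cont_on {s..s'} f" by (rule ac_sub[OF ac]) (use s in auto)
  show "AE t in lebesgue. t \<in> {s..s'} \<longrightarrow>
       (\<exists>d. (f has_real_derivative d) (at t within {s..s'}) \<and> d \<le> M)"
    using der
  proof (rule eventually_mono)
    fix t assume H: "t \<in> {a..b} \<longrightarrow>
       (\<exists>d. (f has_vector_derivative d) (at t within {a..b}) \<and> d \<le> M)"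
    show "t \<in> {s..s'} \<longrightarrow> (\<exists>d. (f has_real_derivative d) (at t within {s..s'}) \<and> d \<le> M)"
    proof
      assume "t \<in> {s..s'}"
      then obtain d where "(f has_vector_derivative d) (at t within {a..b})" "d \<le> M"
        using H s by auto
      then show "\<exists>d. (f has_real_derivative d) (at t within {s..s'}) \<and> d \<le> M"
        using s by (metis has_real_derivative_iff_has_vector_derivative
              has_vector_derivative_within_subset atLeastatMost_subset_iff order_trans)
    qed
  qed
qed

lemma ac_bound_sub_lower:
  fixes f :: "real \<Rightarrow> real"
  assumes ac: "abs_cont_on {a..b} f"
    and der: "AE t in lebesgue. t \<in> {a..b} \<longrightarrow>
       (\<exists>d. (f has_vector_derivative d) (at t within {a..b}) \<and> m \<le> d)"
    and s: "a \<le> s" "s \<le> s'" "s' \<le> b"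
  shows "m * (s' - s) \<le> f s' - f s"
proof -
  have "(\<lambda>t. - f t) s' - (\<lambda>t. - f t) s \<le> (- m) * (s' - s)"
  proof (rule ac_bound_sub[OF _ _ s])
    show "abs_cont_on {a..b} (\<lambda>t. - f t)"
      using ac_linear[OF ac, of uminus] by (simp add: bounded_linear_minus bounded_linear_ident)
    show "AE t in lebesgue. t \<in> {a..b} \<longrightarrow>
       (\<exists>d. ((\<lambda>t. - f t) has_vector_derivative d) (at t within {a..b}) \<and> d \<le> - m)"
      using der by (rule eventually_mono) (auto intro: has_vector_derivative_minus)
  qed
  then show ?thesis by simp
qed



lemma X1_inner: "l \<bullet> X 1 p = fst l"
  by (cases l) (simp add: X_def)
lemma X2_inner: "l \<bullet> X 2 p = snd l * fst p"
  by (cases l) (simp add: X_def)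
lemma Ham_eq: "Ham l p w = fst w * fst l + snd w * (snd l * fst p)"
  by (cases l) (simp add: Ham_def X_def)

lemma Ham_deriv_p:
  assumes "((\<lambda>p. Ham l p w) has_derivative (\<lambda>h. - (W \<bullet> h))) (at P)"
  shows "fst W = - (snd w * snd l)" "snd W = 0"
proof -
  have "((\<lambda>p. Ham l p w) has_derivative (\<lambda>h. snd w * (snd l * fst h))) (at P)"
    unfolding Ham_eq by (auto intro!: derivative_eq_intros)
  then have eq: "(\<lambda>h. - (W \<bullet> h)) = (\<lambda>h. snd w * (snd l * fst h))"
    by (intro has_derivative_unique[OF assms])
  have "- (W \<bullet> (1, 0)) = snd w * (snd l * fst (1::real, 0::real))" using fun_cong[OF eq] by blast
  then show "fst W = - (snd w * snd l)" by (cases W) simp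
  have "- (W \<bullet> (0, 1)) = snd w * (snd l * fst (0::real, 1::real))" using fun_cong[OF eq] by blast
  then show "snd W = 0" by (cases W) simp
qed

lemma AE_interval_ex:
  fixes c d :: real
  assumes cd: "c < d" and ae: "AE t in lebesgue. t \<in> {c<..<d} \<longrightarrow> P t"
  shows "\<exists>t\<in>{c<..<d}. P t"
proof (rule ccontr)
  assume nex: "\<not> (\<exists>t\<in>{c<..<d}. P t)"
  obtain N where N: "{x \<in> space lebesgue. \<not> (x \<in> {c<..<d} \<longrightarrow> P x)} \<subseteq> N"
    "emeasure lebesgue N = 0" "N \<in> sets lebesgue"
    using ae by (rule AE_E)
  have "{c<..<d} \<subseteq> N" using N(1) nex by auto
  then have "emeasure lebesgue {c<..<d} \<le> emeasure lebesgue N" using N(3) by (rule emeasure_mono)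
  then have "emeasure lebesgue {c<..<d} = 0" using N(2) by simp
  moreover have "emeasure lebesgue {c<..<d} = ennreal (d - c)" using cd by simp
  ultimately show False using cd by simp
qed

lemma AE_zero_cont:
  fixes g :: "real \<Rightarrow> real"
  assumes T: "T > 0" and cont: "continuous_on {0..T} g"
    and ae: "AE t in lebesgue. t \<in> {0..T} \<longrightarrow> g t = 0"
  shows "\<forall>t\<in>{0..T}. g t = 0"
proof (rule ccontr)
  assume "\<not> ?thesis"
  then obtain t0 where t0: "t0 \<in> {0..T}" "g t0 \<noteq> 0" by blast
  have gp: "0 < \<bar>g t0\<bar>" using t0 by simp
  obtain d where d: "d > 0" "\<forall>t\<in>{0..T}. dist t t0 < d \<longrightarrow> dist (g t) (g t0) < \<bar>g t0\<bar>"
    using cont t0(1) gp unfolding continuous_on_iff by blast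
  obtain c1 c2 where c12: "c1 < c2" "{c1<..<c2} \<subseteq> {0..T}" "\<forall>t\<in>{c1<..<c2}. dist t t0 < d"
  proof (cases "t0 < T")
    case True
    show ?thesis
    proof (rule that[of t0 "min T (t0 + d)"])
      show "t0 < min T (t0 + d)" using True d(1) by simp
      show "{t0<..<min T (t0 + d)} \<subseteq> {0..T}" using t0(1) by auto
      show "\<forall>t\<in>{t0<..<min T (t0 + d)}. dist t t0 < d" by (auto simp: dist_real_def)
    qed
  next
    case False
    then have tT: "t0 = T" using t0(1) by simp
    show ?thesis
    proof (rule that[of "max 0 (T - d)" T])
      show "max 0 (T - d) < T" using T d(1) by simp
      show "{max 0 (T - d)<..<T} \<subseteq> {0..T}" by auto
      show "\<forall>t\<in>{max 0 (T - d)<..<T}. dist t t0 < d" using tT by (auto simp: dist_real_def)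
    qed
  qed
  have ae2: "AE t in lebesgue. t \<in> {c1<..<c2} \<longrightarrow> g t = 0"
    using ae by (rule eventually_mono) (use c12(2) in blast)
  obtain t where t: "t \<in> {c1<..<c2}" "g t = 0" using AE_interval_ex[OF c12(1) ae2] by blast
  then have "dist (g t) (g t0) < \<bar>g t0\<bar>" using d c12 by blast
  then show False using t by (simp add: dist_real_def)
qed

lemma interior_deriv_zero:
  fixes f :: "real \<Rightarrow> 'a::real_normed_vector"
  assumes g: "bounded_linear g" and t: "t \<in> {c<..<d}" and sub: "{c<..<d} \<subseteq> {0..T}"
    and der: "(f has_vector_derivative v) (at t within {0..T})"
    and z: "\<forall>s\<in>{c<..<d}. g (f s) = (0::real)"
  shows "g v = 0"
proof -
  have "t \<in> interior {0..T}"
    by (meson interior_maximal open_greaterThanLessThan sub t subsetD)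
  then have atw: "at t within {0..T} = at t" by (rule at_within_interior)
  have "(f has_vector_derivative v) (at t)" using der unfolding atw .
  then have d1: "((\<lambda>s. g (f s)) has_vector_derivative g v) (at t)"
    by (rule bounded_linear.has_vector_derivative[OF g])
  have "((\<lambda>s. g (f s)) has_vector_derivative 0) (at t)"
  proof (rule has_vector_derivative_transform_within_open[of "\<lambda>_. 0" 0 t "{c<..<d}"])
    show "((\<lambda>_. 0::real) has_vector_derivative 0) (at t)" by (rule has_vector_derivative_const)
    show "open {c<..<d}" by simp
    show "t \<in> {c<..<d}" by (rule t)
    show "\<And>y. y \<in> {c<..<d} \<Longrightarrow> 0 = g (f y)" using z by simp
  qed
  then show ?thesis using d1 vector_derivative_unique_at by metis
qed

lemma X_combo: "a *\<^sub>R X 1 p + b *\<^sub>R X 2 p = (a, b * fst p)"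
  by (simp add: X_def)

lemma extremal_facts:
  assumes E: "extremal_pair T lam \<gamma> u"
  shows "admissible T \<gamma> u" "abs_cont_on {0..T} lam" "\<forall>t\<in>{0..T}. lam t \<noteq> 0"
    "AE t in lebesgue. t \<in> {0..T} \<longrightarrow> (\<exists>w. (lam has_vector_derivative w) (at t within {0..T})
        \<and> fst w = - (snd (u t) * snd (lam t)) \<and> snd w = 0)"
    "AE t in lebesgue. t \<in> {0..T} \<longrightarrow>
        (\<gamma> has_vector_derivative (fst (u t), snd (u t) * fst (\<gamma> t))) (at t within {0..T})"
    "\<exists>lam0\<ge>0. AE t in lebesgue. t \<in> {0..T} \<longrightarrow>
        fst (u t) * fst (lam t) + snd (u t) * (snd (lam t) * fst (\<gamma> t))
          = \<bar>fst (lam t)\<bar> + \<bar>snd (lam t) * fst (\<gamma> t)\<bar> \<and>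
        \<bar>fst (lam t)\<bar> + \<bar>snd (lam t) * fst (\<gamma> t)\<bar> = lam0"
proof -
  show adm: "admissible T \<gamma> u" using E by (simp add: extremal_pair_def)
  show "abs_cont_on {0..T} lam" "\<forall>t\<in>{0..T}. lam t \<noteq> 0" using E by (simp_all add: extremal_pair_def)
  have "AE t in lebesgue. t \<in> {0..T} \<longrightarrow>
        (\<exists>w. (lam has_vector_derivative w) (at t within {0..T}) \<and>
             ((\<lambda>p. Ham (lam t) p (u t)) has_derivative (\<lambda>h. - (w \<bullet> h))) (at (\<gamma> t)))"
    using E by (simp add: extremal_pair_def)
  then show "AE t in lebesgue. t \<in> {0..T} \<longrightarrow> (\<exists>w. (lam has_vector_derivative w) (at t within {0..T})
        \<and> fst w = - (snd (u t) * snd (lam t)) \<and> snd w = 0)"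
    by (rule eventually_mono) (metis Ham_deriv_p)
  have "AE t in lebesgue. t \<in> {0..T} \<longrightarrow>
        (\<gamma> has_vector_derivative (fst (u t) *\<^sub>R X 1 (\<gamma> t) + snd (u t) *\<^sub>R X 2 (\<gamma> t)))
          (at t within {0..T})"
    using adm by (simp add: admissible_def)
  then show "AE t in lebesgue. t \<in> {0..T} \<longrightarrow>
        (\<gamma> has_vector_derivative (fst (u t), snd (u t) * fst (\<gamma> t))) (at t within {0..T})"
    by (simp only: X_combo)
  have "\<exists>lam0\<ge>0. AE t in lebesgue. t \<in> {0..T} \<longrightarrow>
        Ham (lam t) (\<gamma> t) (u t) = \<bar>lam t \<bullet> X 1 (\<gamma> t)\<bar> + \<bar>lam t \<bullet> X 2 (\<gamma> t)\<bar> \<and>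
        \<bar>lam t \<bullet> X 1 (\<gamma> t)\<bar> + \<bar>lam t \<bullet> X 2 (\<gamma> t)\<bar> = lam0"
    using E by (simp add: extremal_pair_def)
  then show "\<exists>lam0\<ge>0. AE t in lebesgue. t \<in> {0..T} \<longrightarrow>
        fst (u t) * fst (lam t) + snd (u t) * (snd (lam t) * fst (\<gamma> t))
          = \<bar>fst (lam t)\<bar> + \<bar>snd (lam t) * fst (\<gamma> t)\<bar> \<and>
        \<bar>fst (lam t)\<bar> + \<bar>snd (lam t) * fst (\<gamma> t)\<bar> = lam0"
    by (simp only: Ham_eq X1_inner X2_inner)
qed

lemma fst_deriv: "(f has_vector_derivative v) F \<Longrightarrow> ((\<lambda>t. fst (f t)) has_vector_derivative fst v) F"
  by (rule bounded_linear.has_vector_derivative[OF bounded_linear_fst])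
lemma snd_deriv: "(f has_vector_derivative v) F \<Longrightarrow> ((\<lambda>t. snd (f t)) has_vector_derivative snd v) F"
  by (rule bounded_linear.has_vector_derivative[OF bounded_linear_snd])

lemma ac_const:
  fixes f :: "real \<Rightarrow> real"
  assumes ac: "abs_cont_on {0..T} f"
    and der: "AE t in lebesgue. t \<in> {0..T} \<longrightarrow>
       (\<exists>d. (f has_vector_derivative d) (at t within {0..T}) \<and> d = 0)"
  shows "\<forall>t\<in>{0..T}. f t = f 0"
proof
  fix t assume t: "t \<in> {0..T}"
  have "f t - f 0 \<le> 0 * (t - 0)"
    by (rule ac_bound_sub[OF ac _ _ _]) (use t in \<open>auto intro: eventually_mono[OF der]\<close>)
  moreover have "0 * (t - 0) \<le> f t - f 0"
    by (rule ac_bound_sub_lower[OF ac _ _ _]) (use t in \<open>auto intro: eventually_mono[OF der]\<close>)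
  ultimately show "f t = f 0" by simp
qed

lemma lam0_zero_const:
  assumes E: "extremal_pair T lam \<gamma> u" and T: "T > 0"
    and ae: "AE t in lebesgue. t \<in> {0..T} \<longrightarrow> \<bar>fst (lam t)\<bar> + \<bar>snd (lam t) * fst (\<gamma> t)\<bar> = 0"
  shows "\<forall>t\<in>{0..T}. \<gamma> t = \<gamma> 0"
proof -
  note F = extremal_facts[OF E]
  have acg: "abs_cont_on {0..T} \<gamma>" using F(1) by (simp add: admissible_def)
  have conta: "continuous_on {0..T} (\<lambda>t. fst (lam t))"
    by (rule ac_cont[OF ac_linear[OF F(2) bounded_linear_fst]])
  have contb: "continuous_on {0..T} (\<lambda>t. snd (lam t))"
    by (rule ac_cont[OF ac_linear[OF F(2) bounded_linear_snd]])
  have contx: "continuous_on {0..T} (\<lambda>t. fst (\<gamma> t))"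
    by (rule ac_cont[OF ac_linear[OF acg bounded_linear_fst]])
  have a0: "\<forall>t\<in>{0..T}. fst (lam t) = 0"
  proof (rule AE_zero_cont[OF T conta])
    show "AE t in lebesgue. t \<in> {0..T} \<longrightarrow> fst (lam t) = 0"
      using ae by (rule eventually_mono) auto
  qed
  have bx0: "\<forall>t\<in>{0..T}. snd (lam t) * fst (\<gamma> t) = 0"
  proof (rule AE_zero_cont[OF T])
    show "continuous_on {0..T} (\<lambda>t. snd (lam t) * fst (\<gamma> t))"
      by (intro continuous_on_mult contb contx)
    show "AE t in lebesgue. t \<in> {0..T} \<longrightarrow> snd (lam t) * fst (\<gamma> t) = 0"
      using ae
    proof (rule eventually_mono)
      fix t assume H: "t \<in> {0..T} \<longrightarrow> \<bar>fst (lam t)\<bar> + \<bar>snd (lam t) * fst (\<gamma> t)\<bar> = 0"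
      show "t \<in> {0..T} \<longrightarrow> snd (lam t) * fst (\<gamma> t) = 0"
      proof
        assume "t \<in> {0..T}"
        then have "\<bar>fst (lam t)\<bar> + \<bar>snd (lam t) * fst (\<gamma> t)\<bar> = 0" using H by blast
        then have "\<bar>snd (lam t) * fst (\<gamma> t)\<bar> = 0"
          using abs_ge_zero[of "fst (lam t)"] abs_ge_zero[of "snd (lam t) * fst (\<gamma> t)"] by linarith
        then show "snd (lam t) * fst (\<gamma> t) = 0" by (simp only: abs_eq_0)
      qed
    qed
  qed
  have x0: "\<forall>t\<in>{0..T}. fst (\<gamma> t) = 0"
  proof
    fix t assume t: "t \<in> {0..T}"
    have "snd (lam t) \<noteq> 0"
    proof
      assume "snd (lam t) = 0"
      then have "lam t = 0" using a0 t by (simp add: prod_eq_iff)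
      then show False using F(3) t by blast
    qed
    moreover have "snd (lam t) * fst (\<gamma> t) = 0" using bx0 t by blast
    ultimately show "fst (\<gamma> t) = 0" by simp
  qed
  have y0: "\<forall>t\<in>{0..T}. snd (\<gamma> t) = snd (\<gamma> 0)"
  proof (rule ac_const[OF ac_linear[OF acg bounded_linear_snd]])
    show "AE t in lebesgue. t \<in> {0..T} \<longrightarrow>
       (\<exists>d. ((\<lambda>t. snd (\<gamma> t)) has_vector_derivative d) (at t within {0..T}) \<and> d = 0)"
      using F(5)
    proof (rule eventually_mono)
      fix t assume H: "t \<in> {0..T} \<longrightarrow>
        (\<gamma> has_vector_derivative (fst (u t), snd (u t) * fst (\<gamma> t))) (at t within {0..T})"
      show "t \<in> {0..T} \<longrightarrow>
       (\<exists>d. ((\<lambda>t. snd (\<gamma> t)) has_vector_derivative d) (at t within {0..T}) \<and> d = 0)"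
      proof
        assume t: "t \<in> {0..T}"
        have "((\<lambda>t. snd (\<gamma> t)) has_vector_derivative snd (u t) * fst (\<gamma> t)) (at t within {0..T})"
          using snd_deriv[OF H[rule_format, OF t]] by simp
        then show "\<exists>d. ((\<lambda>t. snd (\<gamma> t)) has_vector_derivative d) (at t within {0..T}) \<and> d = 0"
          using x0 t by auto
      qed
    qed
  qed
  show ?thesis
  proof
    fix t assume t: "t \<in> {0..T}"
    have "0 \<in> {0..T}" using T by simp
    then have "fst (\<gamma> t) = fst (\<gamma> 0)" using x0 t by metis
    moreover have "snd (\<gamma> t) = snd (\<gamma> 0)" using y0 t by blast
    ultimately show "\<gamma> t = \<gamma> 0" by (rule prod_eqI)
  qed
qed

lemma b_const:
  assumes E: "extremal_pair T lam \<gamma> u"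
  shows "\<forall>t\<in>{0..T}. snd (lam t) = snd (lam 0)"
proof (rule ac_const[OF ac_linear[OF extremal_facts(2)[OF E] bounded_linear_snd]])
  show "AE t in lebesgue. t \<in> {0..T} \<longrightarrow>
       (\<exists>d. ((\<lambda>t. snd (lam t)) has_vector_derivative d) (at t within {0..T}) \<and> d = 0)"
    using extremal_facts(4)[OF E]
  proof (rule eventually_mono)
    fix t assume H: "t \<in> {0..T} \<longrightarrow> (\<exists>w. (lam has_vector_derivative w) (at t within {0..T})
        \<and> fst w = - (snd (u t) * snd (lam t)) \<and> snd w = 0)"
    show "t \<in> {0..T} \<longrightarrow>
       (\<exists>d. ((\<lambda>t. snd (lam t)) has_vector_derivative d) (at t within {0..T}) \<and> d = 0)"
    proof
      assume "t \<in> {0..T}"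
      then obtain w where "(lam has_vector_derivative w) (at t within {0..T})" "snd w = 0"
        using H by blast
      then show "\<exists>d. ((\<lambda>t. snd (lam t)) has_vector_derivative d) (at t within {0..T}) \<and> d = 0"
        using snd_deriv by blast
    qed
  qed
qed

lemma nonconstant_pos: assumes "nonconstant T \<gamma>" shows "T > 0"
proof (rule ccontr)
  assume "\<not> T > 0"
  obtain s t where "s \<in> {0..T}" "t \<in> {0..T}" "\<gamma> s \<noteq> \<gamma> t"
    using assms unfolding nonconstant_def by blast
  moreover have "s = 0" "t = 0" using calculation \<open>\<not> T > 0\<close> by auto
  ultimately show False by simp
qed

lemma nonconstant_not_const: assumes "nonconstant T \<gamma>" shows "\<not> (\<forall>t\<in>{0..T}. \<gamma> t = \<gamma> 0)"
proof
  assume H: "\<forall>t\<in>{0..T}. \<gamma> t = \<gamma> 0"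
  obtain s t where "s \<in> {0..T}" "t \<in> {0..T}" "\<gamma> s \<noteq> \<gamma> t"
    using assms unfolding nonconstant_def by blast
  then show False using H by metis
qed

lemma sing_main:
  assumes E: "extremal_pair T lam \<gamma> u" and nc: "nonconstant T \<gamma>" and j: "j \<in> {1, 2}"
    and sa: "singular_arc T lam \<gamma> j a0 b0"
  shows "j = 2 \<and> (\<forall>t\<in>{0..T}. snd (lam t) = 0) \<and>
    ((AE t in lebesgue. t \<in> {0..T} \<longrightarrow> fst (u t) = 1) \<or>
     (AE t in lebesgue. t \<in> {0..T} \<longrightarrow> fst (u t) = -1))"
proof -
  have T: "T > 0" using nc by (rule nonconstant_pos)
  note F = extremal_facts[OF E]
  obtain lam0 where l0: "lam0 \<ge> 0" and mx: "AE t in lebesgue. t \<in> {0..T} \<longrightarrow>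
        fst (u t) * fst (lam t) + snd (u t) * (snd (lam t) * fst (\<gamma> t))
          = \<bar>fst (lam t)\<bar> + \<bar>snd (lam t) * fst (\<gamma> t)\<bar> \<and>
        \<bar>fst (lam t)\<bar> + \<bar>snd (lam t) * fst (\<gamma> t)\<bar> = lam0"
    using F(6) by blast
  have sa': "0 \<le> a0" "a0 < b0" "b0 \<le> T" "\<forall>t\<in>{a0<..<b0}. switching lam \<gamma> j t = 0"
    using sa by (simp_all add: singular_arc_def)
  have sub: "{a0<..<b0} \<subseteq> {0..T}" using sa' by auto
  have l0z: False if "lam0 = 0"
  proof -
    have "AE t in lebesgue. t \<in> {0..T} \<longrightarrow> \<bar>fst (lam t)\<bar> + \<bar>snd (lam t) * fst (\<gamma> t)\<bar> = 0"
      using mx by (rule eventually_mono) (use that in blast)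
    then have "\<forall>t\<in>{0..T}. \<gamma> t = \<gamma> 0" by (rule lam0_zero_const[OF E T])
    then show False using nonconstant_not_const[OF nc] by blast
  qed
  have l0z': False if ae: "AE t in lebesgue. t \<in> {a0<..<b0} \<longrightarrow> lam0 = 0"
  proof -
    obtain t where "t \<in> {a0<..<b0}" "lam0 = 0" using AE_interval_ex[OF sa'(2) ae] by blast
    then show False using l0z by blast
  qed
  show ?thesis
  proof (cases "j = 1")
    case True
    have az: "\<forall>t\<in>{a0<..<b0}. fst (lam t) = 0"
      using sa'(4) unfolding True switching_def X1_inner .
    have "AE t in lebesgue. t \<in> {a0<..<b0} \<longrightarrow> lam0 = 0"
      using eventually_conj[OF F(4) mx]
    proof (rule eventually_mono)
      fix t assume H: "(t \<in> {0..T} \<longrightarrow> (\<exists>w. (lam has_vector_derivative w) (at t within {0..T})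
        \<and> fst w = - (snd (u t) * snd (lam t)) \<and> snd w = 0)) \<and> (t \<in> {0..T} \<longrightarrow>
        fst (u t) * fst (lam t) + snd (u t) * (snd (lam t) * fst (\<gamma> t))
          = \<bar>fst (lam t)\<bar> + \<bar>snd (lam t) * fst (\<gamma> t)\<bar> \<and>
        \<bar>fst (lam t)\<bar> + \<bar>snd (lam t) * fst (\<gamma> t)\<bar> = lam0)"
      show "t \<in> {a0<..<b0} \<longrightarrow> lam0 = 0"
      proof
        assume t: "t \<in> {a0<..<b0}"
        then have t': "t \<in> {0..T}" using sub by blast
        obtain w where w: "(lam has_vector_derivative w) (at t within {0..T})"
          "fst w = - (snd (u t) * snd (lam t))" using H t' by blast
        have "fst w = 0" by (rule interior_deriv_zero[OF bounded_linear_fst t sub w(1) az])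
        then have ub: "snd (u t) * snd (lam t) = 0" using w(2) by simp
        have "fst (lam t) = 0" using az t by blast
        moreover have "fst (u t) * fst (lam t) + snd (u t) * (snd (lam t) * fst (\<gamma> t)) = lam0"
          using H t' by metis
        ultimately show "lam0 = 0" using ub by (simp add: mult.assoc[symmetric])
      qed
    qed
    then show ?thesis using l0z' by blast
  next
    case False
    then have j2: "j = 2" using j by simp
    have bc: "\<forall>t\<in>{0..T}. snd (lam t) = snd (lam 0)" by (rule b_const[OF E])
    have b0z: "snd (lam 0) = 0"
    proof (rule ccontr)
      assume bnz: "snd (lam 0) \<noteq> 0"
      have xz: "\<forall>t\<in>{a0<..<b0}. fst (\<gamma> t) = 0"
      proof
        fix t assume t: "t \<in> {a0<..<b0}"
        then have "snd (lam t) * fst (\<gamma> t) = 0" using sa'(4) j2 by (simp add: switching_def X2_inner)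
        moreover have "snd (lam t) = snd (lam 0)" using bc t sub by blast
        ultimately show "fst (\<gamma> t) = 0" using bnz by simp
      qed
      have "AE t in lebesgue. t \<in> {a0<..<b0} \<longrightarrow> lam0 = 0"
        using eventually_conj[OF F(5) mx]
      proof (rule eventually_mono)
        fix t assume H: "(t \<in> {0..T} \<longrightarrow>
          (\<gamma> has_vector_derivative (fst (u t), snd (u t) * fst (\<gamma> t))) (at t within {0..T}))
          \<and> (t \<in> {0..T} \<longrightarrow>
          fst (u t) * fst (lam t) + snd (u t) * (snd (lam t) * fst (\<gamma> t))
            = \<bar>fst (lam t)\<bar> + \<bar>snd (lam t) * fst (\<gamma> t)\<bar> \<and>
          \<bar>fst (lam t)\<bar> + \<bar>snd (lam t) * fst (\<gamma> t)\<bar> = lam0)"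
        show "t \<in> {a0<..<b0} \<longrightarrow> lam0 = 0"
        proof
          assume t: "t \<in> {a0<..<b0}"
          then have t': "t \<in> {0..T}" using sub by blast
          have d: "(\<gamma> has_vector_derivative (fst (u t), snd (u t) * fst (\<gamma> t))) (at t within {0..T})"
            using H t' by blast
          have "fst (fst (u t), snd (u t) * fst (\<gamma> t)) = 0"
            by (rule interior_deriv_zero[OF bounded_linear_fst t sub d xz])
          then have u1: "fst (u t) = 0" by simp
          have "fst (\<gamma> t) = 0" using xz t by blast
          moreover have "fst (u t) * fst (lam t) + snd (u t) * (snd (lam t) * fst (\<gamma> t)) = lam0"
            using H t' by metis
          ultimately show "lam0 = 0" using u1 by simp
        qed
      qed
      then show False using l0z' by blast
    qed
    have sz: "\<forall>t\<in>{0..T}. snd (lam t) = 0" using bc b0z by simp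
    have ac: "\<forall>t\<in>{0..T}. fst (lam t) = fst (lam 0)"
    proof (rule ac_const[OF ac_linear[OF F(2) bounded_linear_fst]])
      show "AE t in lebesgue. t \<in> {0..T} \<longrightarrow>
         (\<exists>d. ((\<lambda>t. fst (lam t)) has_vector_derivative d) (at t within {0..T}) \<and> d = 0)"
        using F(4)
      proof (rule eventually_mono)
        fix t assume H: "t \<in> {0..T} \<longrightarrow> (\<exists>w. (lam has_vector_derivative w) (at t within {0..T})
            \<and> fst w = - (snd (u t) * snd (lam t)) \<and> snd w = 0)"
        show "t \<in> {0..T} \<longrightarrow>
         (\<exists>d. ((\<lambda>t. fst (lam t)) has_vector_derivative d) (at t within {0..T}) \<and> d = 0)"
        proof
          assume t: "t \<in> {0..T}"
          then obtain w where w: "(lam has_vector_derivative w) (at t within {0..T})"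
            "fst w = - (snd (u t) * snd (lam t))" using H by blast
          have "fst w = 0" using w(2) sz t by simp
          then show "\<exists>d. ((\<lambda>t. fst (lam t)) has_vector_derivative d) (at t within {0..T}) \<and> d = 0"
            using fst_deriv[OF w(1)] by blast
        qed
      qed
    qed
    have T0: "0 \<in> {0..T}" using T by simp
    have anz: "fst (lam 0) \<noteq> 0"
    proof
      assume "fst (lam 0) = 0"
      then have "lam 0 = 0" using sz T0 by (simp add: prod_eq_iff)
      then show False using F(3) T0 by blast
    qed
    have mx2: "AE t in lebesgue. t \<in> {0..T} \<longrightarrow> fst (u t) * fst (lam 0) = \<bar>fst (lam 0)\<bar>"
      using mx
    proof (rule eventually_mono)
      fix t assume H: "t \<in> {0..T} \<longrightarrow>
        fst (u t) * fst (lam t) + snd (u t) * (snd (lam t) * fst (\<gamma> t))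
          = \<bar>fst (lam t)\<bar> + \<bar>snd (lam t) * fst (\<gamma> t)\<bar> \<and>
        \<bar>fst (lam t)\<bar> + \<bar>snd (lam t) * fst (\<gamma> t)\<bar> = lam0"
      show "t \<in> {0..T} \<longrightarrow> fst (u t) * fst (lam 0) = \<bar>fst (lam 0)\<bar>"
      proof
        assume t: "t \<in> {0..T}"
        have e1: "fst (lam t) = fst (lam 0)" using ac t by blast
        have e2: "snd (lam t) = 0" using sz t by blast
        show "fst (u t) * fst (lam 0) = \<bar>fst (lam 0)\<bar>" using H t unfolding e1 e2 by simp
      qed
    qed
    have "(AE t in lebesgue. t \<in> {0..T} \<longrightarrow> fst (u t) = 1) \<or>
          (AE t in lebesgue. t \<in> {0..T} \<longrightarrow> fst (u t) = -1)"
    proof (cases "fst (lam 0) > 0")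
      case True
      have "AE t in lebesgue. t \<in> {0..T} \<longrightarrow> fst (u t) = 1"
        using mx2 by (rule eventually_mono) (use True in auto)
      then show ?thesis by blast
    next
      case False
      then have neg: "fst (lam 0) < 0" using anz by simp
      have "AE t in lebesgue. t \<in> {0..T} \<longrightarrow> fst (u t) = -1"
        using mx2
      proof (rule eventually_mono)
        fix t assume "t \<in> {0..T} \<longrightarrow> fst (u t) * fst (lam 0) = \<bar>fst (lam 0)\<bar>"
        then have "t \<in> {0..T} \<longrightarrow> fst (u t) * fst (lam 0) = (-1) * fst (lam 0)" using neg by (auto simp: abs_if)
        then show "t \<in> {0..T} \<longrightarrow> fst (u t) = -1" using neg by (auto simp only: mult_cancel_right)
      qed
      then show ?thesis by blast
    qed
    then show ?thesis using j2 sz by blast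
  qed
qed

lemma adm_fst:
  assumes adm: "admissible T \<gamma> u"
  shows "AE t in lebesgue. t \<in> {0..T} \<longrightarrow>
     ((\<lambda>t. fst (\<gamma> t)) has_vector_derivative fst (u t)) (at t within {0..T}) \<and> \<bar>fst (u t)\<bar> \<le> 1"
proof -
  have a1: "AE t in lebesgue. t \<in> {0..T} \<longrightarrow> \<bar>fst (u t)\<bar> \<le> 1 \<and> \<bar>snd (u t)\<bar> \<le> 1"
    using adm by (simp add: admissible_def)
  have a2: "AE t in lebesgue. t \<in> {0..T} \<longrightarrow>
        (\<gamma> has_vector_derivative (fst (u t) *\<^sub>R X 1 (\<gamma> t) + snd (u t) *\<^sub>R X 2 (\<gamma> t)))
          (at t within {0..T})"
    using adm by (simp add: admissible_def)
  show ?thesis using eventually_conj[OF a1 a2]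
  proof (rule eventually_mono)
    fix t assume H: "(t \<in> {0..T} \<longrightarrow> \<bar>fst (u t)\<bar> \<le> 1 \<and> \<bar>snd (u t)\<bar> \<le> 1) \<and>
      (t \<in> {0..T} \<longrightarrow>
        (\<gamma> has_vector_derivative (fst (u t) *\<^sub>R X 1 (\<gamma> t) + snd (u t) *\<^sub>R X 2 (\<gamma> t)))
          (at t within {0..T}))"
    show "t \<in> {0..T} \<longrightarrow>
     ((\<lambda>t. fst (\<gamma> t)) has_vector_derivative fst (u t)) (at t within {0..T}) \<and> \<bar>fst (u t)\<bar> \<le> 1"
    proof
      assume t: "t \<in> {0..T}"
      have "(\<gamma> has_vector_derivative (fst (u t), snd (u t) * fst (\<gamma> t))) (at t within {0..T})"
        using H t unfolding X_combo by blast
      from fst_deriv[OF this] show "((\<lambda>t. fst (\<gamma> t)) has_vector_derivative fst (u t)) (at t within {0..T}) \<and> \<bar>fst (u t)\<bar> \<le> 1"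
        using H t by simp
    qed
  qed
qed

lemma adm_dx_bounds:
  assumes adm: "admissible T \<gamma> u"
  shows "fst (\<gamma> T) - fst (\<gamma> 0) \<le> T" "- T \<le> fst (\<gamma> T) - fst (\<gamma> 0)"
proof -
  have T: "0 \<le> T" using adm by (simp add: admissible_def)
  have acg: "abs_cont_on {0..T} \<gamma>" using adm by (simp add: admissible_def)
  have ac: "abs_cont_on {0..T} (\<lambda>t. fst (\<gamma> t))"
    by (rule ac_linear[OF acg bounded_linear_fst])
  note D = adm_fst[OF adm]
  have "fst (\<gamma> T) - fst (\<gamma> 0) \<le> 1 * (T - 0)"
  proof (rule ac_bound_sub[OF ac])
    show "AE t in lebesgue. t \<in> {0..T} \<longrightarrow>
       (\<exists>d. ((\<lambda>t. fst (\<gamma> t)) has_vector_derivative d) (at t within {0..T}) \<and> d \<le> 1)"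
      using D by (rule eventually_mono) (auto simp: abs_le_iff)
  qed (use T in simp_all)
  then show "fst (\<gamma> T) - fst (\<gamma> 0) \<le> T" by simp
  have "(-1) * (T - 0) \<le> fst (\<gamma> T) - fst (\<gamma> 0)"
  proof (rule ac_bound_sub_lower[OF ac])
    show "AE t in lebesgue. t \<in> {0..T} \<longrightarrow>
       (\<exists>d. ((\<lambda>t. fst (\<gamma> t)) has_vector_derivative d) (at t within {0..T}) \<and> -1 \<le> d)"
      using D by (rule eventually_mono) (auto simp: abs_le_iff)
  qed (use T in simp_all)
  then show "- T \<le> fst (\<gamma> T) - fst (\<gamma> 0)" by simp
qed

lemma time_min:
  assumes adm: "admissible T \<gamma> u"
    and ae: "(AE t in lebesgue. t \<in> {0..T} \<longrightarrow> fst (u t) = 1) \<or>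
             (AE t in lebesgue. t \<in> {0..T} \<longrightarrow> fst (u t) = -1)"
  shows "time_minimizer T \<gamma>"
  unfolding time_minimizer_def
proof (intro allI impI)
  fix T' \<gamma>' u' assume H: "admissible T' \<gamma>' u' \<and> \<gamma>' 0 = \<gamma> 0 \<and> \<gamma>' T' = \<gamma> T"
  have T: "0 \<le> T" using adm by (simp add: admissible_def)
  have acg: "abs_cont_on {0..T} \<gamma>" using adm by (simp add: admissible_def)
  have ac: "abs_cont_on {0..T} (\<lambda>t. fst (\<gamma> t))"
    by (rule ac_linear[OF acg bounded_linear_fst])
  note D = adm_fst[OF adm]
  have eq: "fst (\<gamma>' T') - fst (\<gamma>' 0) = fst (\<gamma> T) - fst (\<gamma> 0)" using H by simp
  note B = adm_dx_bounds[of T' \<gamma>' u']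
  show "T \<le> T'"
    using ae
  proof
    assume A: "AE t in lebesgue. t \<in> {0..T} \<longrightarrow> fst (u t) = 1"
    have "1 * (T - 0) \<le> fst (\<gamma> T) - fst (\<gamma> 0)"
    proof (rule ac_bound_sub_lower[OF ac])
      show "AE t in lebesgue. t \<in> {0..T} \<longrightarrow>
         (\<exists>d. ((\<lambda>t. fst (\<gamma> t)) has_vector_derivative d) (at t within {0..T}) \<and> 1 \<le> d)"
        using eventually_conj[OF D A] by (rule eventually_mono) auto
    qed (use T in simp_all)
    then show "T \<le> T'" using B H eq by simp
  next
    assume A: "AE t in lebesgue. t \<in> {0..T} \<longrightarrow> fst (u t) = -1"
    have "fst (\<gamma> T) - fst (\<gamma> 0) \<le> (-1) * (T - 0)"
    proof (rule ac_bound_sub[OF ac])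
      show "AE t in lebesgue. t \<in> {0..T} \<longrightarrow>
         (\<exists>d. ((\<lambda>t. fst (\<gamma> t)) has_vector_derivative d) (at t within {0..T}) \<and> d \<le> -1)"
        using eventually_conj[OF D A] by (rule eventually_mono) auto
    qed (use T in simp_all)
    then show "T \<le> T'" using B H eq by simp
  qed
qed

lemma ac_constant: "abs_cont_on S (\<lambda>_. c)"
  unfolding abs_cont_on_def by (auto intro: exI[of _ 1])

lemma construct:
  assumes adm: "admissible T \<gamma> u" and T: "T > 0" and s: "s = 1 \<or> s = -1"
    and ae: "AE t in lebesgue. t \<in> {0..T} \<longrightarrow> fst (u t) = s"
  shows "extremal_with_singular_arc T \<gamma>"
proof -
  define lam where "lam = (\<lambda>_::real. (s, 0::real))"
  have ss: "s * s = 1" "\<bar>s\<bar> = 1" using s by auto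
  have E: "extremal_pair T lam \<gamma> u"
    unfolding extremal_pair_def
  proof (intro conjI)
    show "admissible T \<gamma> u" by (rule adm)
    show "abs_cont_on {0..T} lam" unfolding lam_def by (rule ac_constant)
    show "\<forall>t\<in>{0..T}. lam t \<noteq> 0" using s by (auto simp: lam_def zero_prod_def)
    show "AE t in lebesgue. t \<in> {0..T} \<longrightarrow>
        (\<exists>w. (lam has_vector_derivative w) (at t within {0..T}) \<and>
             ((\<lambda>p. Ham (lam t) p (u t)) has_derivative (\<lambda>h. - (w \<bullet> h))) (at (\<gamma> t)))"
    proof (intro always_eventually allI impI exI[of _ 0] conjI)
      fix t
      show "(lam has_vector_derivative 0) (at t within {0..T})"
        unfolding lam_def by (rule has_vector_derivative_const)
      have "(\<lambda>p. Ham (lam t) p (u t)) = (\<lambda>p. fst (u t) * s)"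
        by (simp add: Ham_eq lam_def)
      moreover have "((\<lambda>p::real\<times>real. fst (u t) * s) has_derivative (\<lambda>h. - (0 \<bullet> h))) (at (\<gamma> t))"
        by (simp add: has_derivative_const)
      ultimately show "((\<lambda>p. Ham (lam t) p (u t)) has_derivative (\<lambda>h. - (0 \<bullet> h))) (at (\<gamma> t))"
        by simp
    qed
    show "AE t in lebesgue. t \<in> {0..T} \<longrightarrow>
        (\<exists>v. (\<gamma> has_vector_derivative v) (at t within {0..T}) \<and>
             ((\<lambda>l. Ham l (\<gamma> t) (u t)) has_derivative (\<lambda>h. v \<bullet> h)) (at (lam t)))"
    proof -
      have a2: "AE t in lebesgue. t \<in> {0..T} \<longrightarrow>
        (\<gamma> has_vector_derivative (fst (u t) *\<^sub>R X 1 (\<gamma> t) + snd (u t) *\<^sub>R X 2 (\<gamma> t)))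
          (at t within {0..T})"
        using adm by (simp add: admissible_def)
      show ?thesis using a2
    proof (rule eventually_mono)
      fix t assume H: "t \<in> {0..T} \<longrightarrow>
        (\<gamma> has_vector_derivative (fst (u t) *\<^sub>R X 1 (\<gamma> t) + snd (u t) *\<^sub>R X 2 (\<gamma> t)))
          (at t within {0..T})"
      show "t \<in> {0..T} \<longrightarrow>
        (\<exists>v. (\<gamma> has_vector_derivative v) (at t within {0..T}) \<and>
             ((\<lambda>l. Ham l (\<gamma> t) (u t)) has_derivative (\<lambda>h. v \<bullet> h)) (at (lam t)))"
      proof
        assume t: "t \<in> {0..T}"
        have d: "(\<gamma> has_vector_derivative (fst (u t), snd (u t) * fst (\<gamma> t))) (at t within {0..T})"
          using H t unfolding X_combo by blast
        have "((\<lambda>l. Ham l (\<gamma> t) (u t)) has_derivative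
               (\<lambda>h. (fst (u t), snd (u t) * fst (\<gamma> t)) \<bullet> h)) (at (lam t))"
          unfolding Ham_eq
          by (rule has_derivative_eq_rhs, (rule derivative_intros)+)
             (auto simp: inner_prod_def algebra_simps)
        then show "\<exists>v. (\<gamma> has_vector_derivative v) (at t within {0..T}) \<and>
             ((\<lambda>l. Ham l (\<gamma> t) (u t)) has_derivative (\<lambda>h. v \<bullet> h)) (at (lam t))"
          using d by blast
      qed
    qed
    qed
    show "\<exists>lam0\<ge>0. AE t in lebesgue. t \<in> {0..T} \<longrightarrow>
        Ham (lam t) (\<gamma> t) (u t) = \<bar>lam t \<bullet> X 1 (\<gamma> t)\<bar> + \<bar>lam t \<bullet> X 2 (\<gamma> t)\<bar> \<and>
        \<bar>lam t \<bullet> X 1 (\<gamma> t)\<bar> + \<bar>lam t \<bullet> X 2 (\<gamma> t)\<bar> = lam0"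
    proof (intro exI[of _ 1] conjI)
      show "AE t in lebesgue. t \<in> {0..T} \<longrightarrow>
        Ham (lam t) (\<gamma> t) (u t) = \<bar>lam t \<bullet> X 1 (\<gamma> t)\<bar> + \<bar>lam t \<bullet> X 2 (\<gamma> t)\<bar> \<and>
        \<bar>lam t \<bullet> X 1 (\<gamma> t)\<bar> + \<bar>lam t \<bullet> X 2 (\<gamma> t)\<bar> = 1"
        using ae
      proof (rule eventually_mono)
        fix t assume "t \<in> {0..T} \<longrightarrow> fst (u t) = s"
        then show "t \<in> {0..T} \<longrightarrow>
          Ham (lam t) (\<gamma> t) (u t) = \<bar>lam t \<bullet> X 1 (\<gamma> t)\<bar> + \<bar>lam t \<bullet> X 2 (\<gamma> t)\<bar> \<and>
          \<bar>lam t \<bullet> X 1 (\<gamma> t)\<bar> + \<bar>lam t \<bullet> X 2 (\<gamma> t)\<bar> = 1"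
          unfolding Ham_eq X1_inner X2_inner using ss by (simp add: lam_def)
      qed
    qed simp
  qed
  have SA: "singular_arc T lam \<gamma> 2 0 T"
    unfolding singular_arc_def switching_def X2_inner using T by (simp add: lam_def)
  show ?thesis unfolding extremal_with_singular_arc_def using E SA by blast
qed

theorem mainTheorem9:
  fixes T :: real and \<gamma> :: "real \<Rightarrow> real \<times> real"
  assumes "nonconstant T \<gamma>"
  shows "(extremal_with_singular_arc T \<gamma> \<longleftrightarrow>
            (\<exists>u. admissible T \<gamma> u \<and>
                 ((AE t in lebesgue. t \<in> {0..T} \<longrightarrow> fst (u t) = 1) \<or>
                  (AE t in lebesgue. t \<in> {0..T} \<longrightarrow> fst (u t) = -1))))
       \<and> (\<forall>u lam j a b. j \<in> {1, 2} \<and> extremal_pair T lam \<gamma> u \<and> singular_arc T lam \<gamma> j a b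
            \<longrightarrow> (\<forall>t\<in>{0..T}. switching lam \<gamma> j t = 0))
       \<and> (extremal_with_singular_arc T \<gamma> \<longrightarrow> time_minimizer T \<gamma>)"
proof -
  have T: "T > 0" using assms by (rule nonconstant_pos)
  have fwd: "\<exists>u. admissible T \<gamma> u \<and>
                 ((AE t in lebesgue. t \<in> {0..T} \<longrightarrow> fst (u t) = 1) \<or>
                  (AE t in lebesgue. t \<in> {0..T} \<longrightarrow> fst (u t) = -1))"
    if "extremal_with_singular_arc T \<gamma>"
  proof -
    have "\<exists>u lam j a b. j \<in> {1, 2} \<and> extremal_pair T lam \<gamma> u \<and> singular_arc T lam \<gamma> j a b"
      using that by (simp only: extremal_with_singular_arc_def)
    then obtain u lam j a b where H0: "j \<in> {1, 2} \<and> extremal_pair T lam \<gamma> u \<and> singular_arc T lam \<gamma> j a b"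
      by (elim exE)
    note H = H0[THEN conjunct1] H0[THEN conjunct2, THEN conjunct1] H0[THEN conjunct2, THEN conjunct2]
    have "admissible T \<gamma> u" by (rule extremal_facts(1)[OF H(2)])
    moreover have "(AE t in lebesgue. t \<in> {0..T} \<longrightarrow> fst (u t) = 1) \<or>
                  (AE t in lebesgue. t \<in> {0..T} \<longrightarrow> fst (u t) = -1)"
      using sing_main[OF H(2) assms H(1) H(3)] by (elim conjE)
    ultimately show ?thesis by (intro exI[of _ u] conjI)
  qed
  have bwd: "extremal_with_singular_arc T \<gamma>"
    if ex: "\<exists>u. admissible T \<gamma> u \<and>
                 ((AE t in lebesgue. t \<in> {0..T} \<longrightarrow> fst (u t) = 1) \<or>
                  (AE t in lebesgue. t \<in> {0..T} \<longrightarrow> fst (u t) = -1))"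
  proof -
    obtain u where u: "admissible T \<gamma> u" "(AE t in lebesgue. t \<in> {0..T} \<longrightarrow> fst (u t) = 1) \<or>
                  (AE t in lebesgue. t \<in> {0..T} \<longrightarrow> fst (u t) = -1)"
      using ex by blast
    from u(2) show ?thesis
    proof
      assume "AE t in lebesgue. t \<in> {0..T} \<longrightarrow> fst (u t) = 1"
      then show ?thesis using construct[OF u(1) T, of 1] by simp
    next
      assume "AE t in lebesgue. t \<in> {0..T} \<longrightarrow> fst (u t) = -1"
      then show ?thesis using construct[OF u(1) T, of "-1"] by simp
    qed
  qed
  have part2: "\<forall>u lam j a b. j \<in> {1, 2} \<and> extremal_pair T lam \<gamma> u \<and> singular_arc T lam \<gamma> j a b
            \<longrightarrow> (\<forall>t\<in>{0..T}. switching lam \<gamma> j t = 0)"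
  proof (intro allI impI)
    fix u lam j a b
    assume H: "j \<in> {1, 2} \<and> extremal_pair T lam \<gamma> u \<and> singular_arc T lam \<gamma> j a b"
    have SM: "j = 2 \<and> (\<forall>t\<in>{0..T}. snd (lam t) = 0) \<and>
    ((AE t in lebesgue. t \<in> {0..T} \<longrightarrow> fst (u t) = 1) \<or>
     (AE t in lebesgue. t \<in> {0..T} \<longrightarrow> fst (u t) = -1))"
      by (rule sing_main[OF H[THEN conjunct2, THEN conjunct1] assms H[THEN conjunct1] H[THEN conjunct2, THEN conjunct2]])
    then have S: "j = 2" "\<forall>t\<in>{0..T}. snd (lam t) = 0" by simp_all
    show "\<forall>t\<in>{0..T}. switching lam \<gamma> j t = 0"
      unfolding S(1) switching_def X2_inner using S(2) by simp
  qed
  have part3: "extremal_with_singular_arc T \<gamma> \<longrightarrow> time_minimizer T \<gamma>"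
  proof
    assume "extremal_with_singular_arc T \<gamma>"
    then obtain u where "admissible T \<gamma> u" "(AE t in lebesgue. t \<in> {0..T} \<longrightarrow> fst (u t) = 1) \<or>
                  (AE t in lebesgue. t \<in> {0..T} \<longrightarrow> fst (u t) = -1)"
      using fwd by blast
    then show "time_minimizer T \<gamma>" by (rule time_min)
  qed
  have part1: "extremal_with_singular_arc T \<gamma> \<longleftrightarrow>
            (\<exists>u. admissible T \<gamma> u \<and>
                 ((AE t in lebesgue. t \<in> {0..T} \<longrightarrow> fst (u t) = 1) \<or>
                  (AE t in lebesgue. t \<in> {0..T} \<longrightarrow> fst (u t) = -1)))"
    using fwd bwd by (rule iffI)
  show ?thesis using part1 part2 part3 by (rule conjI[OF _ conjI])
qed


end
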